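(* Let $V$ be a finite-dimensional real inner product space with an orthogonal basis $e_1,\dots,e_M$ of nonzero vectors. Let $\beta\in V$ be nonzero and suppose there exist a positive integer $L$, functions $l_1\le l_2:\{1,\dots,L\}\to\mathbb Z$ and a partition $\{\Delta_{h,m}:(h,m)\in J\}$ of $\{1,\dots,M\}$ into nonempty sets, $J=\{(h,m):1\le h\le L,\ l_1(h)\le m\le l_2(h)\}$, such that with $r_{h,m}=\sum_{j\in\Delta_{h,m}}\|e_j\|^{-2}$ and $\epsilon(h)=(\sum_m m\,r_{h,m})/(\sum_m r_{h,m})$ (sums over $l_1(h)\le m\le l_2(h)$) we have $-1/2\le\epsilon(h)<1/2$, $\epsilon(1)>\cdots>\epsilon(L)$, and $\beta/\|\beta\|^2=\sum_{h=1}^L\sum_{m=l_1(h)}^{l_2(h)}\sum_{j\in\Delta_{h,m}}(\epsilon(h)-m)e_j/\|e_j\|^2$. Let $i\in\Delta_{h,m}$ and $j\in\Delta_{h',m'}$. Then $\beta\cdot(e_i-e_j)=\|\beta\|^2$ if and only if $h'=h$ and $m'=m+1$; and $\beta\cdot(e_i-e_j)\ge\|\beta\|^2$ if and only if either $m'\ge m+2$, or $m'=m+1$ and $h'\ge h$. *)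

theory Defs
  imports "HOL-Analysis.Analysis"
begin

definition rr :: "(nat \<Rightarrow> 'a::real_inner) \<Rightarrow> (nat \<Rightarrow> int \<Rightarrow> nat set) \<Rightarrow> nat \<Rightarrow> int \<Rightarrow> real" where
  "rr e \<Delta> h m = (\<Sum>j\<in>\<Delta> h m. 1 / (norm (e j))\<^sup>2)"

definition eps :: "(nat \<Rightarrow> 'a::real_inner) \<Rightarrow> (nat \<Rightarrow> int \<Rightarrow> nat set) \<Rightarrow> (nat \<Rightarrow> int) \<Rightarrow> (nat \<Rightarrow> int) \<Rightarrow> nat \<Rightarrow> real" where
  "eps e \<Delta> l1 l2 h =
     (\<Sum>m=l1 h..l2 h. of_int m * rr e \<Delta> h m) / (\<Sum>m=l1 h..l2 h. rr e \<Delta> h m)"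

definition Jset :: "nat \<Rightarrow> (nat \<Rightarrow> int) \<Rightarrow> (nat \<Rightarrow> int) \<Rightarrow> (nat \<times> int) set" where
  "Jset L l1 l2 = {(h, m). 1 \<le> h \<and> h \<le> L \<and> l1 h \<le> m \<and> m \<le> l2 h}"

end

theory Submission
  imports Defs
begin

theorem lemma5p3:
  fixes e :: "nat \<Rightarrow> 'a::euclidean_space" and M L :: nat
    and l1 l2 :: "nat \<Rightarrow> int" and \<Delta> :: "nat \<Rightarrow> int \<Rightarrow> nat set" and \<beta> :: 'a
    and i j h m h' m'
  assumes e_nz: "\<forall>k\<in>{1..M}. e k \<noteq> 0"
    and e_orth: "\<forall>k\<in>{1..M}. \<forall>k'\<in>{1..M}. k \<noteq> k' \<longrightarrow> inner (e k) (e k') = 0"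
    and e_span: "span (e ` {1..M}) = UNIV"
    and beta_nz: "\<beta> \<noteq> 0"
    and L_pos: "L \<ge> 1"
    and l_le: "\<forall>h\<in>{1..L}. l1 h \<le> l2 h"
    and part_nonempty: "\<forall>p\<in>Jset L l1 l2. \<Delta> (fst p) (snd p) \<noteq> {}"
    and part_disj: "\<forall>p\<in>Jset L l1 l2. \<forall>q\<in>Jset L l1 l2. p \<noteq> q \<longrightarrow>
                      \<Delta> (fst p) (snd p) \<inter> \<Delta> (fst q) (snd q) = {}"
    and part_cover: "(\<Union>p\<in>Jset L l1 l2. \<Delta> (fst p) (snd p)) = {1..M}"
    and eps_range: "\<forall>h\<in>{1..L}. - 1/2 \<le> eps e \<Delta> l1 l2 h \<and> eps e \<Delta> l1 l2 h < 1/2"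
    and eps_decr: "\<forall>h\<in>{1..L}. \<forall>h'\<in>{1..L}. h < h' \<longrightarrow> eps e \<Delta> l1 l2 h > eps e \<Delta> l1 l2 h'"
    and beta_eq: "(1 / (norm \<beta>)\<^sup>2) *\<^sub>R \<beta> =
       (\<Sum>h=1..L. \<Sum>m=l1 h..l2 h. \<Sum>j\<in>\<Delta> h m.
          ((eps e \<Delta> l1 l2 h - of_int m) / (norm (e j))\<^sup>2) *\<^sub>R e j)"
    and hm: "(h, m) \<in> Jset L l1 l2" and i_in: "i \<in> \<Delta> h m"
    and hm': "(h', m') \<in> Jset L l1 l2" and j_in: "j \<in> \<Delta> h' m'"
  shows "(inner \<beta> (e i - e j) = (norm \<beta>)\<^sup>2 \<longleftrightarrow> h' = h \<and> m' = m + 1)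
       \<and> (inner \<beta> (e i - e j) \<ge> (norm \<beta>)\<^sup>2 \<longleftrightarrow> m' \<ge> m + 2 \<or> (m' = m + 1 \<and> h' \<ge> h))"
proof -
  define E where "E = eps e \<Delta> l1 l2"
  have cov: "k \<in> {1..M}" if "(a,b) \<in> Jset L l1 l2" "k \<in> \<Delta> a b" for a b k
  proof -
    have "\<Delta> (fst (a,b)) (snd (a,b)) \<subseteq> (\<Union>p\<in>Jset L l1 l2. \<Delta> (fst p) (snd p))"
      using that(1) by (rule UN_upper)
    then show ?thesis using that(2) part_cover by auto
  qed
  have fin: "finite (\<Delta> a b)" if "(a,b) \<in> Jset L l1 l2" for a b
  proof -
    have "\<Delta> a b \<subseteq> {1..M}" using part_cover that by force
    thus ?thesis using finite_subset by blast
  qed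
  have hL: "h \<in> {1..L}" "m \<in> {l1 h..l2 h}" using hm by (auto simp: Jset_def)
  have hL': "h' \<in> {1..L}" "m' \<in> {l1 h'..l2 h'}" using hm' by (auto simp: Jset_def)
  have key: "inner ((1 / (norm \<beta>)\<^sup>2) *\<^sub>R \<beta>) (e k) = E a - of_int b"
    if ab: "(a,b) \<in> Jset L l1 l2" and k: "k \<in> \<Delta> a b" for a b k
  proof -
    have kM: "k \<in> {1..M}" using cov ab k by blast
    have tm: "inner (((E h2 - of_int m2) / (norm (e j))\<^sup>2) *\<^sub>R e j) (e k)
        = (if h2 = a \<and> m2 = b \<and> j = k then E a - of_int b else 0)"
      if "h2 \<in> {1..L}" "m2 \<in> {l1 h2..l2 h2}" "j \<in> \<Delta> h2 m2" for h2 m2 j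
    proof -
      have J2: "(h2,m2) \<in> Jset L l1 l2" using that by (auto simp: Jset_def)
      have jM: "j \<in> {1..M}" using cov J2 that(3) by blast
      show ?thesis
      proof (cases "j = k")
        case True
        have "(h2,m2) = (a,b)"
        proof (rule ccontr)
          assume "(h2,m2) \<noteq> (a,b)"
          then have "\<Delta> h2 m2 \<inter> \<Delta> a b = {}" using part_disj J2 ab \<open>(h2,m2) \<noteq> (a,b)\<close> by (metis fst_conv snd_conv)
          thus False using True that(3) k by blast
        qed
        then have "h2 = a" "m2 = b" by auto
        moreover have "e k \<noteq> 0" using e_nz kM by blast
        moreover have "inner (e k) (e k) = (norm (e k))\<^sup>2" by (simp add: power2_norm_eq_inner)
        ultimately show ?thesis using True by simp
      next
        case False
        then have "inner (e j) (e k) = 0" using e_orth jM kM by blast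
        then show ?thesis using False by simp
      qed
    qed
    have "inner ((1 / (norm \<beta>)\<^sup>2) *\<^sub>R \<beta>) (e k) =
       (\<Sum>h2=1..L. \<Sum>m2=l1 h2..l2 h2. \<Sum>j\<in>\<Delta> h2 m2.
          inner (((E h2 - of_int m2) / (norm (e j))\<^sup>2) *\<^sub>R e j) (e k))"
      unfolding beta_eq E_def by (simp add: inner_sum_left)
    also have "\<dots> = (\<Sum>h2=1..L. \<Sum>m2=l1 h2..l2 h2. \<Sum>j\<in>\<Delta> h2 m2.
          (if h2 = a \<and> m2 = b \<and> j = k then E a - of_int b else 0))"
      by (intro sum.cong refl tm) auto
    also have "\<dots> = (\<Sum>h2=1..L. \<Sum>m2=l1 h2..l2 h2.
          (if h2 = a \<and> m2 = b then E a - of_int b else 0))"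
    proof (intro sum.cong refl)
      fix h2 m2 assume "h2 \<in> {1..L}" "m2 \<in> {l1 h2..l2 h2}"
      show "(\<Sum>j\<in>\<Delta> h2 m2. (if h2 = a \<and> m2 = b \<and> j = k then E a - of_int b else 0))
          = (if h2 = a \<and> m2 = b then E a - of_int b else 0)"
        using fin[OF ab] k by (cases "h2 = a \<and> m2 = b") auto
    qed
    also have "\<dots> = (\<Sum>h2=1..L. (if h2 = a then E a - of_int b else 0))"
    proof (intro sum.cong refl)
      fix h2 assume "h2 \<in> {1..L}"
      have "b \<in> {l1 a..l2 a}" using ab by (auto simp: Jset_def)
      then show "(\<Sum>m2=l1 h2..l2 h2. (if h2 = a \<and> m2 = b then E a - of_int b else 0))
          = (if h2 = a then E a - of_int b else 0)"
        by (cases "h2 = a") auto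
    qed
    also have "\<dots> = E a - of_int b" using ab by (auto simp: Jset_def)
    finally show ?thesis .
  qed
  have nb: "(norm \<beta>)\<^sup>2 > 0" using beta_nz by simp
  have ib: "inner \<beta> (e k) = (norm \<beta>)\<^sup>2 * (E a - of_int b)"
    if "(a,b) \<in> Jset L l1 l2" "k \<in> \<Delta> a b" for a b k
  proof -
    have "(1 / (norm \<beta>)\<^sup>2) * inner \<beta> (e k) = E a - of_int b" using key[OF that] by simp
    thus ?thesis using nb by (simp add: field_simps)
  qed
  have X: "inner \<beta> (e i - e j) = (norm \<beta>)\<^sup>2 * ((E h - E h') + of_int (m' - m))"
    using ib[OF hm i_in] ib[OF hm' j_in] by (simp add: inner_diff_right algebra_simps)
  have r1: "-1/2 \<le> E h" "E h < 1/2" "-1/2 \<le> E h'" "E h' < 1/2"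
    using eps_range hL(1) hL'(1) unfolding E_def by auto
  have dec: "E h > E h'" if "h < h'" using eps_decr hL(1) hL'(1) that unfolding E_def by auto
  have dec2: "E h < E h'" if "h' < h" using eps_decr hL(1) hL'(1) that unfolding E_def by auto
  have eq1: "inner \<beta> (e i - e j) = (norm \<beta>)\<^sup>2 \<longleftrightarrow> (E h - E h') + of_int (m' - m) = 1"
    using X nb by auto
  have ge1: "inner \<beta> (e i - e j) \<ge> (norm \<beta>)\<^sup>2 \<longleftrightarrow> (E h - E h') + of_int (m' - m) \<ge> 1"
    using X nb by (metis mult.right_neutral mult_le_cancel_left_pos)
  have A: "(E h - E h') + of_int (m' - m) = 1 \<longleftrightarrow> h' = h \<and> m' = m + 1"
  proof
    assume H: "(E h - E h') + of_int (m' - m) = 1"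
    have "m' - m = 1"
    proof -
      have "of_int (m' - m) > (0::real)" "of_int (m' - m) < (2::real)" using H r1 by linarith+
      hence "m' - m > 0" "m' - m < 2" by linarith+
      thus ?thesis by linarith
    qed
    hence "E h = E h'" using H by simp
    hence "h = h'" using dec dec2 by (metis less_irrefl linorder_neqE_nat)
    thus "h' = h \<and> m' = m + 1" using \<open>m' - m = 1\<close> by simp
  qed auto
  have B: "(E h - E h') + of_int (m' - m) \<ge> 1 \<longleftrightarrow> m' \<ge> m + 2 \<or> (m' = m + 1 \<and> h' \<ge> h)"
  proof
    assume H: "(E h - E h') + of_int (m' - m) \<ge> 1"
    have "of_int (m' - m) > (0::real)" using H r1 by linarith
    hence "m' - m \<ge> 1" by linarith
    moreover have "h' \<ge> h" if "m' - m = 1"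
    proof (rule ccontr)
      assume "\<not> h' \<ge> h" then have "E h < E h'" using dec2 by simp
      thus False using H that by simp
    qed
    ultimately show "m' \<ge> m + 2 \<or> (m' = m + 1 \<and> h' \<ge> h)" by force
  next
    assume H: "m' \<ge> m + 2 \<or> (m' = m + 1 \<and> h' \<ge> h)"
    show "(E h - E h') + of_int (m' - m) \<ge> 1"
    proof (cases "m' \<ge> m + 2")
      case True
      hence "of_int (m' - m) \<ge> (2::real)" by linarith
      thus ?thesis using r1 by linarith
    next
      case False
      hence "m' = m + 1" "h' \<ge> h" using H by auto
      moreover have "E h \<ge> E h'" using dec \<open>h' \<ge> h\<close> by (cases "h = h'") auto
      ultimately show ?thesis by simp
    qed
  qed
  show ?thesis using eq1 ge1 A B by blast
qed

end
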